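(* Let $\alpha=(\alpha_k)_{k\in\mathbb{N}}\in\ell^2$. For natural numbers $a<b$, the quantity $L([a,b])$ is nonincreasing as $a$ increases (with $b$ fixed) and nondecreasing as $b$ increases (with $a$ fixed).
   Context: $\mathbb{N}=\{0,1,2,\dots\}$. For a natural interval $I=[a,b]\cap\mathbb{N}$, write $\|f\|_{2,I}=(\sum_{k\in I}|f(k)|^2)^{1/2}$, $\mu(I)=\sum_{k\in I}|\alpha_k|^2$, and for $f\in\ell^2$ $$l(I,f)=\sum_{k\in I}\sum_{n\in I\setminus\{k\}}\Big|\alpha_k\alpha_n\sum_{j=\min(k,n)+1}^{\max(k,n)}f(j)\Big|^2.$$ Define $L(I)=\big(\sup_{\|f\|_{2,I}\le1} l(I,f)/\mu(I)\big)^{1/2}$ (supremum over $f\in\ell^2$ supported in $I$), and $L(I)=0$ if $\alpha_k=0$ for all $k\in I$. *)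

theory Defs
  imports "HOL-Analysis.Analysis"
begin

definition norm2_on :: "nat set \<Rightarrow> (nat \<Rightarrow> complex) \<Rightarrow> real" where
  "norm2_on I f = sqrt (\<Sum>k\<in>I. (cmod (f k))\<^sup>2)"

definition mu :: "(nat \<Rightarrow> complex) \<Rightarrow> nat set \<Rightarrow> real" where
  "mu \<alpha> I = (\<Sum>k\<in>I. (cmod (\<alpha> k))\<^sup>2)"

definition l_fun :: "(nat \<Rightarrow> complex) \<Rightarrow> nat set \<Rightarrow> (nat \<Rightarrow> complex) \<Rightarrow> real" where
  "l_fun \<alpha> I f = (\<Sum>k\<in>I. \<Sum>n\<in>I - {k}.
      (cmod (\<alpha> k * \<alpha> n * (\<Sum>j\<in>{min k n + 1..max k n}. f j)))\<^sup>2)"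

text \<open>Supremum over all f supported in I with norm at most 1 (such f are automatically in l2,
  since I is finite).\<close>
definition L_fun :: "(nat \<Rightarrow> complex) \<Rightarrow> nat set \<Rightarrow> real" where
  "L_fun \<alpha> I = (if (\<forall>k\<in>I. \<alpha> k = 0) then 0
     else sqrt (Sup {l_fun \<alpha> I f / mu \<alpha> I | f.
                       (\<forall>k. k \<notin> I \<longrightarrow> f k = 0) \<and> norm2_on I f \<le> 1}))"

end

theory Submission
  imports Defs
begin

lemma var_real:
  fixes w y :: "nat \<Rightarrow> real"
  assumes "finite I"
  shows "(\<Sum>k\<in>I. \<Sum>n\<in>I. w k * w n * (y n - y k)\<^sup>2)
       = 2 * (\<Sum>k\<in>I. w k) * (\<Sum>n\<in>I. w n * (y n)\<^sup>2) - 2 * (\<Sum>n\<in>I. w n * y n)\<^sup>2"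
proof -
  define W where "W = (\<Sum>k\<in>I. w k)"
  define S2 where "S2 = (\<Sum>n\<in>I. w n * (y n)\<^sup>2)"
  define S1 where "S1 = (\<Sum>n\<in>I. w n * y n)"
  have e: "w k * w n * (y n - y k)\<^sup>2 = w k * (w n * (y n)\<^sup>2) + (w k * (y k)\<^sup>2) * w n - (2 * (w k * y k)) * (w n * y n)" for k n
    by (simp add: power2_eq_square algebra_simps)
  have inner: "(\<Sum>n\<in>I. w k * w n * (y n - y k)\<^sup>2) = w k * S2 + (w k * (y k)\<^sup>2) * W - (2 * (w k * y k)) * S1" for k
    unfolding e sum_subtractf sum.distrib S2_def W_def S1_def
    by (simp only: sum_distrib_left)
  have "(\<Sum>k\<in>I. \<Sum>n\<in>I. w k * w n * (y n - y k)\<^sup>2) = (\<Sum>k\<in>I. w k * S2 + (w k * (y k)\<^sup>2) * W - (2 * (w k * y k)) * S1)"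
    using inner by simp
  also have "\<dots> = W * S2 + S2 * W - 2 * S1 * S1"
  proof -
    have a1: "(\<Sum>k\<in>I. w k * S2) = W * S2" by (simp add: W_def sum_distrib_right)
    have a2: "(\<Sum>k\<in>I. (w k * (y k)\<^sup>2) * W) = S2 * W" by (simp add: S2_def sum_distrib_right)
    have "(\<Sum>k\<in>I. (2 * (w k * y k)) * S1) = (\<Sum>k\<in>I. 2 * (w k * y k)) * S1"
      by (rule sum_distrib_right[symmetric])
    also have "\<dots> = 2 * S1 * S1" by (simp add: S1_def sum_distrib_left)
    finally have a3: "(\<Sum>k\<in>I. (2 * (w k * y k)) * S1) = 2 * S1 * S1" .
    show ?thesis by (simp only: sum_subtractf sum.distrib a1 a2 a3)
  qed
  finally show ?thesis unfolding W_def S2_def S1_def by (simp add: power2_eq_square)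
qed

lemma var_complex:
  fixes w :: "nat \<Rightarrow> real" and x :: "nat \<Rightarrow> complex"
  assumes "finite I"
  shows "(\<Sum>k\<in>I. \<Sum>n\<in>I. w k * w n * (cmod (x n - x k))\<^sup>2)
       \<le> 2 * (\<Sum>k\<in>I. w k) * (\<Sum>n\<in>I. w n * (cmod (x n))\<^sup>2)"
proof -
  have c: "\<And>z. (cmod z)\<^sup>2 = (Re z)\<^sup>2 + (Im z)\<^sup>2" by (simp add: cmod_power2)
  have "(\<Sum>k\<in>I. \<Sum>n\<in>I. w k * w n * (cmod (x n - x k))\<^sup>2)
     = (\<Sum>k\<in>I. \<Sum>n\<in>I. w k * w n * (Re (x n) - Re (x k))\<^sup>2)
     + (\<Sum>k\<in>I. \<Sum>n\<in>I. w k * w n * (Im (x n) - Im (x k))\<^sup>2)"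
    unfolding c by (simp add: algebra_simps sum.distrib)
  also have "\<dots> = 2 * (\<Sum>k\<in>I. w k) * (\<Sum>n\<in>I. w n * (Re (x n))\<^sup>2) - 2 * (\<Sum>n\<in>I. w n * Re (x n))\<^sup>2
     + (2 * (\<Sum>k\<in>I. w k) * (\<Sum>n\<in>I. w n * (Im (x n))\<^sup>2) - 2 * (\<Sum>n\<in>I. w n * Im (x n))\<^sup>2)"
    using var_real[OF assms, of w "\<lambda>n. Re (x n)"] var_real[OF assms, of w "\<lambda>n. Im (x n)"] by simp
  also have "\<dots> \<le> 2 * (\<Sum>k\<in>I. w k) * (\<Sum>n\<in>I. w n * (Re (x n))\<^sup>2)
     + 2 * (\<Sum>k\<in>I. w k) * (\<Sum>n\<in>I. w n * (Im (x n))\<^sup>2)"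
    by simp
  also have "\<dots> = 2 * (\<Sum>k\<in>I. w k) * (\<Sum>n\<in>I. w n * (cmod (x n))\<^sup>2)"
    unfolding c by (simp add: algebra_simps sum.distrib)
  finally show ?thesis .
qed

lemma var_shift:
  fixes w :: "nat \<Rightarrow> real" and x :: "nat \<Rightarrow> complex"
  assumes "finite I"
  shows "(\<Sum>k\<in>I. \<Sum>n\<in>I. w k * w n * (cmod (x n - x k))\<^sup>2)
       \<le> 2 * (\<Sum>k\<in>I. w k) * (\<Sum>n\<in>I. w n * (cmod (x n - c))\<^sup>2)"
  using var_complex[OF assms, of w "\<lambda>n. x n - c"] by simp

definition P :: "(nat \<Rightarrow> complex) \<Rightarrow> nat \<Rightarrow> complex" where
  "P f m = sum f {..m}"

lemma range_sum:
  "(\<Sum>j\<in>{min k n + 1..max k n}. f j) = P f (max k n) - P f (min k n)"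
proof -
  have "{..max k n} = {..min k n} \<union> {min k n + 1..max k n}" by auto
  moreover have "{..min k n} \<inter> {min k n + 1..max k n} = {}" by auto
  ultimately have "P f (max k n) = P f (min k n) + (\<Sum>j\<in>{min k n + 1..max k n}. f j)"
    unfolding P_def by (simp add: sum.union_disjoint)
  then show ?thesis by simp
qed

lemma l_alt:
  assumes "finite I"
  shows "l_fun \<alpha> I f = (\<Sum>k\<in>I. \<Sum>n\<in>I. (cmod (\<alpha> k))\<^sup>2 * (cmod (\<alpha> n))\<^sup>2 * (cmod (P f n - P f k))\<^sup>2)"
proof -
  have t: "(cmod (\<alpha> k * \<alpha> n * (\<Sum>j\<in>{min k n + 1..max k n}. f j)))\<^sup>2
      = (cmod (\<alpha> k))\<^sup>2 * (cmod (\<alpha> n))\<^sup>2 * (cmod (P f n - P f k))\<^sup>2" for k n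
  proof -
    have "cmod (P f (max k n) - P f (min k n)) = cmod (P f n - P f k)"
      by (cases "k \<le> n") (auto simp: max_def min_def norm_minus_commute)
    then show ?thesis unfolding range_sum by (simp add: norm_mult power_mult_distrib)
  qed
  have "l_fun \<alpha> I f = (\<Sum>k\<in>I. \<Sum>n\<in>I - {k}. (cmod (\<alpha> k))\<^sup>2 * (cmod (\<alpha> n))\<^sup>2 * (cmod (P f n - P f k))\<^sup>2)"
    unfolding l_fun_def t ..
  also have "\<dots> = (\<Sum>k\<in>I. \<Sum>n\<in>I. (cmod (\<alpha> k))\<^sup>2 * (cmod (\<alpha> n))\<^sup>2 * (cmod (P f n - P f k))\<^sup>2)"
  proof (rule sum.cong[OF refl])
    fix k assume "k \<in> I"
    then show "(\<Sum>n\<in>I - {k}. (cmod (\<alpha> k))\<^sup>2 * (cmod (\<alpha> n))\<^sup>2 * (cmod (P f n - P f k))\<^sup>2)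
      = (\<Sum>n\<in>I. (cmod (\<alpha> k))\<^sup>2 * (cmod (\<alpha> n))\<^sup>2 * (cmod (P f n - P f k))\<^sup>2)"
      using assms by (simp add: sum_diff1)
  qed
  finally show ?thesis .
qed

lemma main_ineq:
  assumes "finite J" "I \<subseteq> J"
  shows "l_fun \<alpha> I f * mu \<alpha> J \<le> l_fun \<alpha> J f * mu \<alpha> I"
proof -
  define w where "w k = (cmod (\<alpha> k))\<^sup>2" for k
  define F where "F k n = w k * w n * (cmod (P f n - P f k))\<^sup>2" for k n
  have fI: "finite I" using assms finite_subset by blast
  define N where "N = J - I"
  have fN: "finite N" using assms N_def by simp
  have JIN: "J = I \<union> N" "I \<inter> N = {}" using assms N_def by auto
  have Fnn: "F k n \<ge> 0" for k n by (simp add: F_def w_def)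
  have Fsym: "F k n = F n k" for k n by (simp add: F_def norm_minus_commute)
  define A where "A = (\<Sum>k\<in>I. \<Sum>n\<in>I. F k n)"
  define m where "m = (\<Sum>k\<in>I. w k)"
  have lI: "l_fun \<alpha> I f = A" unfolding A_def F_def w_def using l_alt[OF fI] by simp
  have lJ: "l_fun \<alpha> J f = (\<Sum>k\<in>J. \<Sum>n\<in>J. F k n)" unfolding F_def w_def using l_alt[OF assms(1)] by simp
  have muI: "mu \<alpha> I = m" unfolding mu_def m_def w_def ..
  have muJ: "mu \<alpha> J = m + (\<Sum>q\<in>N. w q)" unfolding mu_def m_def w_def JIN(1)
    using fI fN JIN(2) by (simp add: sum.union_disjoint)
  have per_q: "w q * A \<le> 2 * m * (\<Sum>k\<in>I. F k q)" for q
  proof -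
    have "A \<le> 2 * m * (\<Sum>k\<in>I. w k * (cmod (P f k - P f q))\<^sup>2)"
      unfolding A_def F_def m_def by (rule var_shift[OF fI])
    then have "w q * A \<le> w q * (2 * m * (\<Sum>k\<in>I. w k * (cmod (P f k - P f q))\<^sup>2))"
      by (rule mult_left_mono) (simp add: w_def)
    also have "\<dots> = 2 * m * (\<Sum>k\<in>I. F k q)"
      by (simp add: F_def sum_distrib_left algebra_simps norm_minus_commute)
    finally show ?thesis .
  qed
  have split: "(\<Sum>k\<in>J. \<Sum>n\<in>J. F k n) = A + (\<Sum>k\<in>I. \<Sum>n\<in>N. F k n) + (\<Sum>k\<in>N. \<Sum>n\<in>I. F k n) + (\<Sum>k\<in>N. \<Sum>n\<in>N. F k n)"
    unfolding A_def JIN(1) using fI fN JIN(2) by (simp add: sum.union_disjoint sum.distrib)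
  have sw: "(\<Sum>k\<in>I. \<Sum>n\<in>N. F k n) = (\<Sum>q\<in>N. \<Sum>k\<in>I. F k q)"
    by (rule sum.swap)
  have sw2: "(\<Sum>k\<in>N. \<Sum>n\<in>I. F k n) = (\<Sum>q\<in>N. \<Sum>k\<in>I. F k q)"
    using Fsym by simp
  have NN: "(\<Sum>k\<in>N. \<Sum>n\<in>N. F k n) \<ge> 0" using Fnn by (simp add: sum_nonneg)
  have m0: "m \<ge> 0" unfolding m_def w_def by (simp add: sum_nonneg)
  have Anon: "A \<ge> 0" unfolding A_def using Fnn by (simp add: sum_nonneg)
  have "(\<Sum>q\<in>N. w q * A) \<le> (\<Sum>q\<in>N. 2 * m * (\<Sum>k\<in>I. F k q))"
    by (rule sum_mono) (rule per_q)
  then have "(\<Sum>q\<in>N. w q) * A \<le> 2 * m * (\<Sum>q\<in>N. \<Sum>k\<in>I. F k q)"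
    by (simp add: sum_distrib_left sum_distrib_right)
  moreover have "0 \<le> m * (\<Sum>k\<in>N. \<Sum>n\<in>N. F k n)" using m0 NN by simp
  moreover have "A * (m + (\<Sum>q\<in>N. w q)) = A * m + (\<Sum>q\<in>N. w q) * A" by (simp add: algebra_simps)
  moreover have "(\<Sum>k\<in>J. \<Sum>n\<in>J. F k n) * m = A * m + 2 * m * (\<Sum>q\<in>N. \<Sum>k\<in>I. F k q) + m * (\<Sum>k\<in>N. \<Sum>n\<in>N. F k n)"
    unfolding split sw sw2 by (simp add: algebra_simps)
  ultimately have "A * (m + (\<Sum>q\<in>N. w q)) \<le> (\<Sum>k\<in>J. \<Sum>n\<in>J. F k n) * m"
    by linarith
  then show ?thesis unfolding lI lJ muI muJ .
qed

lemma abs_le1: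
  assumes "\<forall>k. k \<notin> J \<longrightarrow> f k = 0" "norm2_on J f \<le> 1" "finite J"
  shows "cmod (f j) \<le> 1"
proof (cases "j \<in> J")
  case True
  have S: "(\<Sum>k\<in>J. (cmod (f k))\<^sup>2) \<le> 1" using assms(2) unfolding norm2_on_def by simp
  have "(cmod (f j))\<^sup>2 \<le> (\<Sum>k\<in>J. (cmod (f k))\<^sup>2)"
    by (rule member_le_sum) (use True assms(3) in auto)
  with S have "(cmod (f j))\<^sup>2 \<le> 1\<^sup>2" by simp
  then show ?thesis by (rule power2_le_imp_le) simp
next
  case False then show ?thesis using assms(1) by simp
qed

lemma bdd_J:
  assumes "finite J"
  shows "bdd_above {l_fun \<alpha> J f / mu \<alpha> J | f. (\<forall>k. k \<notin> J \<longrightarrow> f k = 0) \<and> norm2_on J f \<le> 1}"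
proof (rule bdd_aboveI)
  define B where "B = (\<Sum>k\<in>J. \<Sum>n\<in>J - {k}. (cmod (\<alpha> k))\<^sup>2 * (cmod (\<alpha> n))\<^sup>2 * (real (Max J))\<^sup>2)"
  fix x assume "x \<in> {l_fun \<alpha> J f / mu \<alpha> J | f. (\<forall>k. k \<notin> J \<longrightarrow> f k = 0) \<and> norm2_on J f \<le> 1}"
  then obtain f where x: "x = l_fun \<alpha> J f / mu \<alpha> J" and f1: "\<forall>k. k \<notin> J \<longrightarrow> f k = 0" and f2: "norm2_on J f \<le> 1"
    by blast
  have fb: "cmod (f j) \<le> 1" for j using abs_le1[OF f1 f2 assms] .
  have tm: "(cmod (\<alpha> k * \<alpha> n * (\<Sum>j\<in>{min k n + 1..max k n}. f j)))\<^sup>2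
      \<le> (cmod (\<alpha> k))\<^sup>2 * (cmod (\<alpha> n))\<^sup>2 * (real (Max J))\<^sup>2" if "k \<in> J" "n \<in> J" for k n
  proof -
    have "cmod (\<Sum>j\<in>{min k n + 1..max k n}. f j) \<le> (\<Sum>j\<in>{min k n + 1..max k n}. cmod (f j))"
      by (rule norm_sum)
    also have "\<dots> \<le> (\<Sum>j\<in>{min k n + 1..max k n}. 1)" by (rule sum_mono) (rule fb)
    also have "\<dots> = real (max k n - min k n)" by simp
    also have "\<dots> \<le> real (Max J)"
    proof -
      have "max k n \<le> Max J" using that assms by (simp add: max_def)
      then have "max k n - min k n \<le> Max J" by linarith
      then show ?thesis by (simp only: of_nat_le_iff)
    qed
    finally have "(cmod (\<Sum>j\<in>{min k n + 1..max k n}. f j))\<^sup>2 \<le> (real (Max J))\<^sup>2"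
      by (rule power_mono) simp
    moreover have "(cmod (\<alpha> k * \<alpha> n * (\<Sum>j\<in>{min k n + 1..max k n}. f j)))\<^sup>2
       = ((cmod (\<alpha> k))\<^sup>2 * (cmod (\<alpha> n))\<^sup>2) * (cmod (\<Sum>j\<in>{min k n + 1..max k n}. f j))\<^sup>2"
      by (simp only: norm_mult power_mult_distrib)
    moreover have "0 \<le> (cmod (\<alpha> k))\<^sup>2 * (cmod (\<alpha> n))\<^sup>2" by simp
    ultimately show ?thesis using mult_left_mono by metis
  qed
  have "l_fun \<alpha> J f \<le> B" unfolding l_fun_def B_def
    by (intro sum_mono tm) auto
  moreover have "mu \<alpha> J \<ge> 0" unfolding mu_def by (simp add: sum_nonneg)
  ultimately show "x \<le> B / mu \<alpha> J" unfolding x by (rule divide_right_mono)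
qed

lemma l_nonneg: "l_fun \<alpha> I f \<ge> 0" unfolding l_fun_def by (simp add: sum_nonneg)
lemma mu_nonneg: "mu \<alpha> I \<ge> 0" unfolding mu_def by (simp add: sum_nonneg)

lemma L_nonneg:
  assumes "finite J"
  shows "L_fun \<alpha> J \<ge> 0"
proof -
  let ?A = "{l_fun \<alpha> J f / mu \<alpha> J | f. (\<forall>k. k \<notin> J \<longrightarrow> f k = 0) \<and> norm2_on J f \<le> 1}"
  have n0: "norm2_on J (\<lambda>_. 0) \<le> 1" by (simp add: norm2_on_def)
  have mem: "l_fun \<alpha> J (\<lambda>_. 0) / mu \<alpha> J \<in> ?A" using n0 by blast
  have z: "l_fun \<alpha> J (\<lambda>_. 0) = 0" by (simp add: l_fun_def)
  have "l_fun \<alpha> J (\<lambda>_. 0) / mu \<alpha> J \<le> Sup ?A" by (rule cSup_upper[OF mem bdd_J[OF assms]])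
  then have "Sup ?A \<ge> 0" unfolding z by simp
  then show ?thesis unfolding L_fun_def by simp
qed

lemma L_mono:
  assumes "finite J" "I \<subseteq> J"
  shows "L_fun \<alpha> I \<le> L_fun \<alpha> J"
proof (cases "\<forall>k\<in>I. \<alpha> k = 0")
  case True
  then show ?thesis using L_nonneg[OF assms(1)] unfolding L_fun_def[of _ I] by simp
next
  case False
  then obtain k0 where k0: "k0 \<in> I" "\<alpha> k0 \<noteq> 0" by blast
  have fI: "finite I" using assms finite_subset by blast
  have muI: "mu \<alpha> I > 0"
  proof -
    have "(cmod (\<alpha> k0))\<^sup>2 \<le> mu \<alpha> I" unfolding mu_def
      by (rule member_le_sum) (use k0 fI in auto)
    moreover have "(cmod (\<alpha> k0))\<^sup>2 > 0" using k0 by simp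
    ultimately show ?thesis by linarith
  qed
  have muJ: "mu \<alpha> I \<le> mu \<alpha> J" unfolding mu_def
    by (rule sum_mono2) (use assms in auto)
  have FJ: "\<not> (\<forall>k\<in>J. \<alpha> k = 0)" using k0 assms by auto
  let ?AI = "{l_fun \<alpha> I f / mu \<alpha> I | f. (\<forall>k. k \<notin> I \<longrightarrow> f k = 0) \<and> norm2_on I f \<le> 1}"
  let ?AJ = "{l_fun \<alpha> J f / mu \<alpha> J | f. (\<forall>k. k \<notin> J \<longrightarrow> f k = 0) \<and> norm2_on J f \<le> 1}"
  have "Sup ?AI \<le> Sup ?AJ"
  proof (rule cSup_mono)
    have n0: "norm2_on I (\<lambda>_. 0) \<le> 1" by (simp add: norm2_on_def)
    then have "l_fun \<alpha> I (\<lambda>_. 0) / mu \<alpha> I \<in> ?AI" by blast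
    then show "?AI \<noteq> {}" by blast
    show "bdd_above ?AJ" by (rule bdd_J[OF assms(1)])
    fix x assume "x \<in> ?AI"
    then obtain f where x: "x = l_fun \<alpha> I f / mu \<alpha> I" and f1: "\<forall>k. k \<notin> I \<longrightarrow> f k = 0" and f2: "norm2_on I f \<le> 1"
      by blast
    have f1': "\<forall>k. k \<notin> J \<longrightarrow> f k = 0" using f1 assms by auto
    have "(\<Sum>k\<in>J. (cmod (f k))\<^sup>2) = (\<Sum>k\<in>I. (cmod (f k))\<^sup>2)"
      by (rule sum.mono_neutral_right) (use assms f1 in auto)
    then have f2': "norm2_on J f \<le> 1" using f2 unfolding norm2_on_def by simp
    have ineq: "l_fun \<alpha> I f * mu \<alpha> J \<le> l_fun \<alpha> J f * mu \<alpha> I" by (rule main_ineq[OF assms])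
    have "x \<le> l_fun \<alpha> J f / mu \<alpha> J"
    proof -
      have p: "mu \<alpha> I * mu \<alpha> J > 0" using muI muJ by simp
      have "l_fun \<alpha> I f / mu \<alpha> I = (l_fun \<alpha> I f * mu \<alpha> J) / (mu \<alpha> I * mu \<alpha> J)"
        using muI muJ by simp
      also have "\<dots> \<le> (l_fun \<alpha> J f * mu \<alpha> I) / (mu \<alpha> I * mu \<alpha> J)"
        by (rule divide_right_mono[OF ineq]) (use p in simp)
      also have "\<dots> = l_fun \<alpha> J f / mu \<alpha> J" using muI by simp
      finally show ?thesis unfolding x .
    qed
    moreover have "l_fun \<alpha> J f / mu \<alpha> J \<in> ?AJ" using f1' f2' by blast
    ultimately show "\<exists>y\<in>?AJ. x \<le> y" by blast
  qed
  moreover have "L_fun \<alpha> I = sqrt (Sup ?AI)" unfolding L_fun_def if_not_P[OF False] ..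
  moreover have "L_fun \<alpha> J = sqrt (Sup ?AJ)" unfolding L_fun_def if_not_P[OF FJ] ..
  ultimately show ?thesis by simp
qed

theorem lemma3p2:
  fixes \<alpha> :: "nat \<Rightarrow> complex"
  assumes "summable (\<lambda>k. (cmod (\<alpha> k))\<^sup>2)"
  shows "(\<forall>a a' b. a \<le> a' \<and> a' < b \<longrightarrow> L_fun \<alpha> {a'..b} \<le> L_fun \<alpha> {a..b}) \<and>
         (\<forall>a b b'. a < b \<and> b \<le> b' \<longrightarrow> L_fun \<alpha> {a..b} \<le> L_fun \<alpha> {a..b'})"
proof (intro conjI allI impI)
  fix a a' b :: nat assume h: "a \<le> a' \<and> a' < b"
  show "L_fun \<alpha> {a'..b} \<le> L_fun \<alpha> {a..b}"
    by (rule L_mono) (use h in auto)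
next
  fix a b b' :: nat assume h: "a < b \<and> b \<le> b'"
  show "L_fun \<alpha> {a..b} \<le> L_fun \<alpha> {a..b'}"
    by (rule L_mono) (use h in auto)
qed

end
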